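(* Let $a_1,a_2\in\mathbb R$ and set $b_1=a_1-a_2$, $b_2=a_1-1$. Then $(a_1,a_2)$ is a good pair if and only if $(b_1,b_2)$ is a good pair.
   Context: For $x\in\mathbb R$, $[x]_2$ denotes the unique number in $[-1,1)$ congruent to $x$ modulo $2\mathbb Z$. A pair $(a_1,a_2)$ of real numbers is a good pair if none of $a_1,a_2,a_1-a_2$ is an integer and $[a_1]_2\,[a_2]_2>0$ and $|[a_1]_2|<|[a_2]_2|$. *)

theory Defs
  imports Complex_Main
begin

text \<open>[x]_2: the unique number in [-1,1) congruent to x modulo 2Z.\<close>
definition red2 :: "real \<Rightarrow> real" where
  "red2 x = x - 2 * of_int \<lfloor>(x + 1) / 2\<rfloor>"

definition good_pair :: "real \<Rightarrow> real \<Rightarrow> bool" where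
  "good_pair a1 a2 \<longleftrightarrow>
     a1 \<notin> \<int> \<and> a2 \<notin> \<int> \<and> a1 - a2 \<notin> \<int> \<and>
     red2 a1 * red2 a2 > 0 \<and> \<bar>red2 a1\<bar> < \<bar>red2 a2\<bar>"

end

theory Submission
  imports Defs
begin

lemma red2_eq:
  assumes "-1 \<le> x - 2 * of_int k" "x - 2 * of_int k < 1"
  shows "red2 x = x - 2 * of_int k"
proof -
  have "\<lfloor>(x + 1) / 2\<rfloor> = k" using assms by (intro floor_unique) (auto simp: field_simps)
  thus ?thesis by (simp add: red2_def)
qed

lemma red2_bounds: "-1 \<le> red2 x" "red2 x < 1"
proof -
  have "of_int \<lfloor>(x + 1) / 2\<rfloor> \<le> (x+1)/2" "(x+1)/2 < of_int \<lfloor>(x + 1) / 2\<rfloor> + 1"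
    by linarith+
  thus "-1 \<le> red2 x" "red2 x < 1" by (auto simp: red2_def field_simps)
qed

lemma red2_decomp: obtains m where "x = red2 x + 2 * of_int m"
  by (simp add: red2_def)

lemma red2_shift: "red2 (x + 2 * of_int m) = red2 x"
proof -
  obtain k where k: "x = red2 x + 2 * of_int k" by (rule red2_decomp)
  have "red2 (x + 2 * of_int m) = (x + 2 * of_int m) - 2 * of_int (k + m)"
    using red2_bounds[of x] k by (intro red2_eq) (auto simp: algebra_simps)
  thus ?thesis using k by (simp add: algebra_simps)
qed

lemma Ints_shift: "(x + 2 * of_int m \<in> \<int>) = ((x::real) \<in> \<int>)"
proof
  assume "x + 2 * of_int m \<in> \<int>"
  hence "x + 2 * of_int m - 2 * of_int m \<in> \<int>" by (intro Ints_diff) auto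
  thus "x \<in> \<int>" by simp
qed auto

lemma Ints_minus1: "((x::real) - 1 \<in> \<int>) = (x \<in> \<int>)"
proof
  assume "x - 1 \<in> \<int>"
  hence "x - 1 + 1 \<in> \<int>" by (intro Ints_add) auto
  thus "x \<in> \<int>" by simp
qed auto

lemma Ints_neg1: "((1::real) - x \<in> \<int>) = (x \<in> \<int>)"
proof
  assume "1 - x \<in> \<int>"
  hence "1 - (1 - x) \<in> \<int>" by (intro Ints_diff) auto
  thus "x \<in> \<int>" by simp
qed auto

theorem lemma6p1:
  fixes a1 a2 :: real
  shows "good_pair a1 a2 \<longleftrightarrow> good_pair (a1 - a2) (a1 - 1)"
proof -
  define x where "x = red2 a1"
  define y where "y = red2 a2"
  obtain m where m: "a1 = x + 2 * of_int m" unfolding x_def by (rule red2_decomp)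
  obtain n where n: "a2 = y + 2 * of_int n" unfolding y_def by (rule red2_decomp)
  have xb: "-1 \<le> x" "x < 1" "-1 \<le> y" "y < 1" unfolding x_def y_def using red2_bounds by auto
  have i1: "(a1 \<in> \<int>) = (x \<in> \<int>)" using m Ints_shift by simp
  have i2: "(a2 \<in> \<int>) = (y \<in> \<int>)" using n Ints_shift by simp
  have e1: "a1 - a2 = (x - y) + 2 * of_int (m - n)" using m n by (simp add: algebra_simps)
  have e2: "a1 - 1 = (x - 1) + 2 * of_int m" using m by (simp add: algebra_simps)
  have i3: "(a1 - a2 \<in> \<int>) = (x - y \<in> \<int>)" unfolding e1 by (rule Ints_shift)
  have r1: "red2 (a1 - a2) = red2 (x - y)" unfolding e1 by (rule red2_shift)
  have r2: "red2 (a1 - 1) = red2 (x - 1)" unfolding e2 by (rule red2_shift)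
  have d: "(a1 - a2) - (a1 - 1) = 1 - a2" by simp
  have ints: "(a1 \<notin> \<int> \<and> a2 \<notin> \<int> \<and> a1 - a2 \<notin> \<int>) =
     (a1 - a2 \<notin> \<int> \<and> a1 - 1 \<notin> \<int> \<and> (a1 - a2) - (a1 - 1) \<notin> \<int>)"
    unfolding d Ints_minus1 Ints_neg1 by blast
  show ?thesis
  proof (cases "a1 \<notin> \<int> \<and> a2 \<notin> \<int> \<and> a1 - a2 \<notin> \<int>")
    case False thus ?thesis using ints unfolding good_pair_def by blast
  next
    case True
    hence nx: "x \<notin> \<int>" and ny: "y \<notin> \<int>" and nxy: "x - y \<notin> \<int>" using i1 i2 i3 by auto
    have x0: "x \<noteq> 0" "x \<noteq> -1" using nx by auto
    have y0: "y \<noteq> 0" "y \<noteq> -1" using ny by auto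
    have xy: "x - y \<noteq> -1" "x - y \<noteq> 1" "x - y \<noteq> 0" using nxy by auto
    have "(x * y > 0 \<and> \<bar>x\<bar> < \<bar>y\<bar>) =
          (red2 (x - y) * red2 (x - 1) > 0 \<and> \<bar>red2 (x - y)\<bar> < \<bar>red2 (x - 1)\<bar>)"
    proof (cases "x > 0")
      case True
      have v: "red2 (x - 1) = x - 1" using red2_eq[of "x - 1" 0] True xb by simp
      show ?thesis
      proof (cases "x - y < 1")
        case True
        have "red2 (x - y) = x - y" using red2_eq[of "x - y" 0] True xb \<open>x > 0\<close> by simp
        thus ?thesis using v \<open>x > 0\<close> xb x0 y0 xy
          by (auto simp: abs_if zero_less_mult_iff)
      next
        case False
        have "red2 (x - y) = x - y - 2" using red2_eq[of "x - y" 1] False xb by simp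
        thus ?thesis using v \<open>x > 0\<close> xb x0 y0 xy False
          by (auto simp: abs_if zero_less_mult_iff)
      qed
    next
      case False
      hence xn: "x < 0" using x0 by simp
      have v: "red2 (x - 1) = x + 1" using red2_eq[of "x - 1" "-1"] xn xb by simp
      show ?thesis
      proof (cases "x - y \<ge> -1")
        case True
        have "red2 (x - y) = x - y" using red2_eq[of "x - y" 0] True xb xn by simp
        thus ?thesis using v xn xb x0 y0 xy
          by (auto simp: abs_if zero_less_mult_iff)
      next
        case False
        have "red2 (x - y) = x - y + 2" using red2_eq[of "x - y" "-1"] False xb by simp
        thus ?thesis using v xn xb x0 y0 xy False
          by (auto simp: abs_if zero_less_mult_iff)
      qed
    qed
    thus ?thesis using True ints unfolding good_pair_def r1 r2 x_def[symmetric] y_def[symmetric]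
      by blast
  qed
qed

end
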